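(* Let $n\ge 3$, $0<m<\frac{n-2}{n}$, $\eta_0>0$, $\rho_1>0$, let $\beta$ satisfy $-\frac{\rho_1}{2}<\beta<\frac{m\rho_1}{n-2-nm}$, and let $\alpha=\frac{2\beta+\rho_1}{1-m}$. Let $r_0>0$ and let $f\in C^1([0,r_0);\mathbb{R})\cap C^2((0,r_0);\mathbb{R})$ be a radially symmetric solution in $B_{r_0}$ of $$(f^m/m)_{rr}+\frac{n-1}{r}(f^m/m)_r+\alpha f+\beta r f_r=0,\quad f>0,\quad 0<r<r_0,$$ with $f(0)=\eta_0$, $f_r(0)=0$. Then $f_r(r)<0$ for all $0<r<r_0$.
   Context: $B_R=\{x\in\mathbb{R}^n:|x|<R\}$; $r=|x|$ and $f_r$ is the radial derivative. *)

theory Defs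
  imports "HOL-Analysis.Analysis"
begin

end

theory Submission
  imports Defs
begin

theorem lemma2p2:
  fixes n :: nat and m \<eta>0 \<rho>1 \<beta> \<alpha> r0 :: real
    and f f' f'' :: "real \<Rightarrow> real"
  assumes n3: "n \<ge> 3"
    and m_pos: "0 < m" and m_lt: "m < (real n - 2) / real n"
    and eta0: "\<eta>0 > 0" and rho1: "\<rho>1 > 0"
    and beta_lo: "- \<rho>1 / 2 < \<beta>"
    and beta_hi: "\<beta> < m * \<rho>1 / (real n - 2 - real n * m)"
    and alpha_def: "\<alpha> = (2 * \<beta> + \<rho>1) / (1 - m)"
    and r0: "r0 > 0"
    and C1_deriv: "\<forall>r\<in>{0..<r0}. (f has_real_derivative f' r) (at r within {0..<r0})"
    and C1_cont: "continuous_on {0..<r0} f'"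
    and C2_deriv: "\<forall>r\<in>{0<..<r0}. (f' has_real_derivative f'' r) (at r)"
    and C2_cont: "continuous_on {0<..<r0} f''"
    and f_pos: "\<forall>r\<in>{0<..<r0}. f r > 0"
    and ode: "\<forall>r\<in>{0<..<r0}.
        deriv (deriv (\<lambda>s. f s powr m / m)) r
        + (real n - 1) / r * deriv (\<lambda>s. f s powr m / m) r
        + \<alpha> * f r + \<beta> * r * f' r = 0"
    and init_f: "f 0 = \<eta>0" and init_fr: "f' 0 = 0"
  shows "\<forall>r\<in>{0<..<r0}. f' r < 0"
proof -
  have "(real n - 2) / real n < 1" using n3 by (simp add: divide_less_eq)
  then have m1: "m < 1" using m_lt by linarith
  have nD: "real n - 2 - real n * m > 0" using m_lt n3 by (simp add: less_divide_eq algebra_simps)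
  have alpha_pos: "\<alpha> > 0" using alpha_def m1 beta_lo by simp
  have key: "(1 - m) * (\<alpha> - real n * \<beta>) = \<rho>1 - \<beta> * (real n - 2 - real n * m)"
    using alpha_def m1 by (simp add: field_simps)
  have "\<rho>1 - \<beta> * (real n - 2 - real n * m) > 0"
  proof (cases "\<beta> \<le> 0")
    case True then show ?thesis using nD rho1 by (smt (verit) mult_nonpos_nonneg)
  next
    case False
    have "\<beta> * (real n - 2 - real n * m) < m * \<rho>1" using beta_hi nD by (simp add: less_divide_eq)
    also have "\<dots> < \<rho>1" using m1 rho1 by simp
    finally show ?thesis by simp
  qed
  then have "\<alpha> - real n * \<beta> > 0" using key m1 by (smt (verit) mult_nonneg_nonpos)
  then have cK: "\<alpha> / real n - \<beta> > 0" using n3 by (simp add: field_simps)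
  define I where "I = {0<..<r0}"
  have openI: "open I" unfolding I_def by simp
  have fd: "(f has_real_derivative f' r) (at r)" if "r \<in> I" for r
    proof -
    have "r \<in> {0..<r0}" "r \<in> interior {0..<r0}" using that unfolding I_def by auto
    then show ?thesis using C1_deriv at_within_interior[of r "{0..<r0}"] by metis
  qed
  have fcont: "continuous_on {0..<r0} f"
    using C1_deriv DERIV_continuous continuous_on_eq_continuous_within by blast
  have fpos0: "f r > 0" if "r \<in> {0..<r0}" for r
    using that f_pos init_f eta0 by (cases "r = 0") auto
  define w where "w s = f s powr (m - 1) * f' s" for s
  define w' where "w' s = (m - 1) * f s powr (m - 1 - 1) * f' s * f' s + f s powr (m - 1) * f'' s" for s
  have ud: "((\<lambda>s. f s powr m / m) has_real_derivative w r) (at r)" if "r \<in> I" for r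
  proof -
    have "((\<lambda>s. f s powr m) has_real_derivative m * f r powr (m - of_nat 1) * f' r) (at r)"
      by (rule DERIV_fun_powr[OF fd[OF that]]) (use fpos0 that I_def in auto)
    from DERIV_cdivide[OF this, of m] show ?thesis using m_pos unfolding w_def by simp
  qed
  have du: "deriv (\<lambda>s. f s powr m / m) r = w r" if "r \<in> I" for r
    using ud[OF that] by (rule DERIV_imp_deriv)
  have wd: "(w has_real_derivative w' r) (at r)" if "r \<in> I" for r
  proof -
    have "((\<lambda>s. f s powr (m-1)) has_real_derivative (m-1) * f r powr (m - 1 - of_nat 1) * f' r) (at r)"
      by (rule DERIV_fun_powr[OF fd[OF that]]) (use fpos0 that I_def in auto)
    from DERIV_mult[OF this C2_deriv[rule_format, of r]] show ?thesis
      using that unfolding w_def w'_def I_def by (simp add: algebra_simps)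
  qed
  have ddu: "deriv (deriv (\<lambda>s. f s powr m / m)) r = w' r" if "r \<in> I" for r
  proof -
    have "eventually (\<lambda>s. s \<in> I) (nhds r)" using openI that by (rule eventually_nhds_in_open)
    then have "eventually (\<lambda>s. deriv (\<lambda>s. f s powr m / m) s = w s) (nhds r)"
      by eventually_elim (rule du)
    then have "deriv (deriv (\<lambda>s. f s powr m / m)) r = deriv w r" by (rule deriv_cong_ev) simp
    also have "\<dots> = w' r" using wd[OF that] by (rule DERIV_imp_deriv)
    finally show ?thesis .
  qed
  have ode': "w' r + (real n - 1) / r * w r + \<alpha> * f r + \<beta> * r * f' r = 0" if "r \<in> I" for r
    using ode[rule_format, of r] that du[OF that] ddu[OF that] unfolding I_def by simp
  obtain k where nk: "n = k + 3" using n3 by (metis add.commute le_Suc_ex)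
  define L where "L r = r^(n-1) * w r" for r
  have LD: "(L has_real_derivative - (r^(n-1) * (\<alpha> * f r + \<beta> * r * f' r))) (at r)" if "r \<in> I" for r
  proof -
    have "(L has_real_derivative (real (n-1) * r^(n-1-1)) * w r + w' r * r^(n-1)) (at r)"
      unfolding L_def using DERIV_mult[OF DERIV_pow[of "n-1" r] wd[OF that]] by simp
    moreover have "(real (n-1) * r^(n-1-1)) * w r + w' r * r^(n-1) = - (r^(n-1) * (\<alpha> * f r + \<beta> * r * f' r))"
    proof -
      have r: "r > 0" using that I_def by auto
      have e: "r * ((real n - 1) / r * w r) = (real n - 1) * w r" using r by simp
      have "r * (w' r + (real n - 1) / r * w r + \<alpha> * f r + \<beta> * r * f' r) = 0" using ode'[OF that] by simp
      then have "r * w' r + (real n - 1) * w r + \<alpha>*r*f r + \<beta>*r*r*f' r = 0" unfolding distrib_left e by (simp add: algebra_simps)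
      then have "(r*r^k) * (r * w' r + (real n - 1) * w r + \<alpha>*r*f r + \<beta>*r*r*f' r) = 0" by simp
      then show ?thesis unfolding nk by (simp add: algebra_simps power_Suc)
    qed
    ultimately show ?thesis by simp
  qed
  define K where "K r = L r + (\<alpha> / real n) * r^n * f r" for r
  have KD: "(K has_real_derivative (\<alpha> / real n - \<beta>) * r^n * f' r) (at r)" if "r \<in> I" for r
  proof -
    have "(K has_real_derivative - (r^(n-1) * (\<alpha> * f r + \<beta> * r * f' r)) + (\<alpha> / real n) * (real n * r^(n-1) * f r + r^n * f' r)) (at r)"
      unfolding K_def
      by (rule derivative_eq_intros LD[OF that] fd[OF that] DERIV_pow refl | simp)+ (use n3 in \<open>simp add: field_simps\<close>)
    then show ?thesis
    proof (rule DERIV_cong)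
      have "real n > 0" using n3 by simp
      then show "- (r^(n-1) * (\<alpha> * f r + \<beta> * r * f' r)) + (\<alpha> / real n) * (real n * r^(n-1) * f r + r^n * f' r) = (\<alpha> / real n - \<beta>) * r^n * f' r"
        unfolding nk by (simp add: field_simps power_add power3_eq_cube)
    qed
  qed
  have wcont: "continuous_on {0..<r0} w"
    unfolding w_def using fcont C1_cont fpos0
    by (intro continuous_intros) (auto, metis atLeastLessThan_iff less_irrefl)
  have Lcont: "continuous_on {0..<r0} L" unfolding L_def using wcont by (intro continuous_intros)
  have Kcont: "continuous_on {0..<r0} K" unfolding K_def using Lcont fcont by (intro continuous_intros)
  have L0: "L 0 = 0" and K0: "K 0 = 0" unfolding K_def L_def w_def using nk init_fr by auto
  define g where "g r = \<alpha> * f r + \<beta> * r * f' r" for r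
  have gcont: "continuous_on {0..<r0} g" unfolding g_def using fcont C1_cont by (intro continuous_intros)
  have g0: "g 0 > 0" unfolding g_def using init_f alpha_pos eta0 by simp
  obtain d where d: "d > 0" "\<forall>x'\<in>{0..<r0}. dist x' 0 < d \<longrightarrow> dist (g x') (g 0) < g 0"
    using gcont g0 r0 unfolding continuous_on_iff by (metis atLeastLessThan_iff order_refl)
  define d' where "d' = min d r0"
  have d'pos: "d' > 0" using d r0 unfolding d'_def by simp
  have near0: "f' r < 0" if "0 < r" "r < d'" for r
  proof -
    have "L r < L 0"
    proof (rule DERIV_neg_imp_decreasing_open[OF that(1)])
      fix x assume x: "0 < x" "x < r"
      then have xI: "x \<in> I" using that unfolding I_def d'_def by auto
      have "g x > 0" using d(2)[rule_format, of x] x that unfolding d'_def by (auto simp: dist_real_def)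
      then have "- (x^(n-1) * g x) < 0" using x by simp
      then show "\<exists>y. (L has_real_derivative y) (at x) \<and> y < 0" using LD[OF xI] unfolding g_def by blast
    next
      show "continuous_on {0..r} L" using that unfolding d'_def by (intro continuous_on_subset[OF Lcont]) auto
    qed
    then have "L r < 0" using L0 by simp
    then have "r^(n-1) * w r < 0" unfolding L_def by simp
    then have "w r < 0" using that by (simp add: mult_less_0_iff)
    moreover have "f r powr (m - 1) > 0" using fpos0[of r] that unfolding d'_def by auto
    ultimately show ?thesis unfolding w_def by (simp add: mult_less_0_iff)
  qed
  show ?thesis
  proof (rule ccontr)
    assume "\<not> ?thesis"
    then obtain r1 where r1: "0 < r1" "r1 < r0" "f' r1 \<ge> 0" by (auto simp: not_less)
    have r1d: "d' \<le> r1" using near0 r1 by (meson not_le not_less)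
    define A where "A = {d'/2..r1} \<inter> f' -` {0..}"
    have "closed A" unfolding A_def
      by (rule continuous_closed_preimage) (use C1_cont r1 d'pos in \<open>auto intro: continuous_on_subset\<close>)
    moreover have "r1 \<in> A" using r1 r1d d'pos unfolding A_def by auto
    then have "A \<noteq> {}" by blast
    moreover have "bdd_below A" unfolding A_def by auto
    ultimately have cA: "Inf A \<in> A" by (rule closed_contains_Inf[rotated 2])
    define c where "c = Inf A"
    have c: "d'/2 \<le> c" "c \<le> r1" "f' c \<ge> 0" using cA unfolding c_def A_def by auto
    have below: "f' s < 0" if "0 < s" "s < c" for s
    proof (rule ccontr)
      assume "\<not> f' s < 0"
      then have "s \<ge> d'" using near0 that by force
      then have "s \<in> A" using that c \<open>\<not> f' s < 0\<close> unfolding A_def by auto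
      then have "c \<le> s" unfolding c_def using \<open>bdd_below A\<close> by (simp add: cInf_lower)
      then show False using that by simp
    qed
    have cpos: "0 < c" using c d'pos by simp
    have "K c < K 0"
    proof (rule DERIV_neg_imp_decreasing_open[OF cpos])
      fix x assume x: "0 < x" "x < c"
      then have xI: "x \<in> I" using c r1 unfolding I_def by auto
      have "(\<alpha> / real n - \<beta>) * x^n * f' x < 0" using below[OF x] cK x
        by (simp add: mult_pos_neg)
      then show "\<exists>y. (K has_real_derivative y) (at x) \<and> y < 0" using KD[OF xI] by blast
    next
      show "continuous_on {0..c} K" using c r1 by (intro continuous_on_subset[OF Kcont]) auto
    qed
    then have "K c < 0" using K0 by simp
    then have "c^(n-1) * w c + (\<alpha> / real n) * c^n * f c < 0" unfolding K_def L_def by simp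
    moreover have "(\<alpha> / real n) * c^n * f c > 0" using alpha_pos cpos fpos0[of c] c r1 n3 by simp
    ultimately have "c^(n-1) * w c < 0" by linarith
    then have "w c < 0" using cpos by (simp add: mult_less_0_iff)
    moreover have "f c powr (m - 1) > 0" using fpos0[of c] c r1 cpos by auto
    ultimately have "f' c < 0" unfolding w_def by (simp add: mult_less_0_iff)
    then show False using c by simp
  qed
qed
end
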